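(* Let $w_0\in\mathbb{N}$ and $w=(w_1,\dots,w_n)\in\mathbb{N}^n$ with each $w_i\le 2^{n^2}$, let $M=cn$ for a sufficiently large absolute constant $c>0$, let $\lambda=M\|w\|_2$, and define $p_W(x)=\left(\sum_{i=1}^n w_ix_i-w_0\right)^2+\lambda\sum_{i=1}^n x_i(1-x_i)$, $f_W(x)=\mathrm{sign}(\tfrac12-p_W(x))$, and $\alpha_n=\frac12\left(1-\sqrt{1-2/\lambda}\right)$. If $x\in[0,1]^n$ is at $\ell_1$ distance more than $\alpha_n$ from every point of $\{0,1\}^n$, then $f_W(x)=-1$.
   Context: $\mathrm{sign}(0)=1$; $\|w\|_2$ is the Euclidean norm. *)

theory Defs
  imports Complex_Main
begin

definition sign1 :: "real \<Rightarrow> real" where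
  "sign1 t = (if t \<ge> 0 then 1 else -1)"

text \<open>Vectors in R^n / N^n are functions on the index set {1..n}.\<close>
definition l2norm :: "nat \<Rightarrow> (nat \<Rightarrow> nat) \<Rightarrow> real" where
  "l2norm n w = sqrt (\<Sum>i=1..n. (real (w i))\<^sup>2)"

definition lam :: "real \<Rightarrow> nat \<Rightarrow> (nat \<Rightarrow> nat) \<Rightarrow> real" where
  "lam c n w = (c * real n) * l2norm n w"

definition pW :: "real \<Rightarrow> nat \<Rightarrow> nat \<Rightarrow> (nat \<Rightarrow> nat) \<Rightarrow> (nat \<Rightarrow> real) \<Rightarrow> real" where
  "pW c n w0 w x = ((\<Sum>i=1..n. real (w i) * x i) - real w0)\<^sup>2
                   + lam c n w * (\<Sum>i=1..n. x i * (1 - x i))"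

definition fW :: "real \<Rightarrow> nat \<Rightarrow> nat \<Rightarrow> (nat \<Rightarrow> nat) \<Rightarrow> (nat \<Rightarrow> real) \<Rightarrow> real" where
  "fW c n w0 w x = sign1 (1/2 - pW c n w0 w x)"

definition alpha :: "real \<Rightarrow> nat \<Rightarrow> (nat \<Rightarrow> nat) \<Rightarrow> real" where
  "alpha c n w = (1 - sqrt (1 - 2 / lam c n w)) / 2"

definition l1dist :: "nat \<Rightarrow> (nat \<Rightarrow> real) \<Rightarrow> (nat \<Rightarrow> real) \<Rightarrow> real" where
  "l1dist n x v = (\<Sum>i=1..n. \<bar>x i - v i\<bar>)"

end

theory Submission
  imports Defs
begin

lemma sum_sq_le: "(\<forall>i\<in>A. 0 \<le> (d i::real)) \<Longrightarrow> (\<Sum>i\<in>A. (d i)\<^sup>2) \<le> (\<Sum>i\<in>A. d i)\<^sup>2"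
proof (induction A rule: infinite_finite_induct)
  case (insert a F)
  have "0 \<le> d a" "0 \<le> sum d F" using insert by (auto intro: sum_nonneg)
  then have "(d a)\<^sup>2 + (sum d F)\<^sup>2 \<le> (d a + sum d F)\<^sup>2"
    by (simp add: power2_eq_square algebra_simps)
  then show ?case using insert by auto
qed auto

theorem claim5p8:
  shows "\<exists>c0>0. \<forall>c\<ge>c0. \<forall>(n::nat) (w0::nat) (w::nat \<Rightarrow> nat) (x::nat \<Rightarrow> real).
     (\<forall>i\<in>{1..n}. w i \<le> 2 ^ (n\<^sup>2)) \<longrightarrow>
     (\<exists>i\<in>{1..n}. w i \<noteq> 0) \<longrightarrow>
     (\<forall>i\<in>{1..n}. 0 \<le> x i \<and> x i \<le> 1) \<longrightarrow>
     (\<forall>v::nat \<Rightarrow> real. (\<forall>i\<in>{1..n}. v i \<in> {0, 1}) \<longrightarrow> l1dist n x v > alpha c n w) \<longrightarrow>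
     fW c n w0 w x = -1"
proof (intro exI[of _ 4] conjI allI impI)
  fix c :: real and n w0 w and x :: "nat \<Rightarrow> real"
  assume c: "4 \<le> c" and nz: "\<exists>i\<in>{1..n}. w i \<noteq> 0"
    and x01: "\<forall>i\<in>{1..n}. 0 \<le> x i \<and> x i \<le> 1"
    and far: "\<forall>v::nat \<Rightarrow> real. (\<forall>i\<in>{1..n}. v i \<in> {0, 1}) \<longrightarrow> l1dist n x v > alpha c n w"
  obtain j where j: "j \<in> {1..n}" "w j \<noteq> 0" using nz by blast
  have n1: "real n \<ge> 1" using j by auto
  have "(real (w j))\<^sup>2 \<le> (\<Sum>i=1..n. (real (w i))\<^sup>2)"
    using j by (intro member_le_sum) auto
  moreover have "1 \<le> (real (w j))\<^sup>2" using j by (simp add: one_le_power)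
  ultimately have "1 \<le> l2norm n w" unfolding l2norm_def by (simp add: real_le_rsqrt)
  then have "c * real n * 1 \<le> c * real n * l2norm n w" using c n1 by (intro mult_left_mono) auto
  moreover have "4 \<le> c * real n" proof -
    have "c * 1 \<le> c * real n" using c n1 by (intro mult_left_mono) auto
    then show ?thesis using c by linarith
  qed
  ultimately have L: "4 \<le> lam c n w" unfolding lam_def by linarith
  define s where "s = sqrt (1 - 2 / lam c n w)"
  have s0: "0 < s" unfolding s_def using L by (simp add: field_simps)
  have s1: "s < 1" unfolding s_def using L by simp
  have ss: "s\<^sup>2 = 1 - 2 / lam c n w" unfolding s_def using L by (simp add: field_simps)
  define a where "a = alpha c n w"
  have a_def': "a = (1 - s) / 2" unfolding a_def alpha_def s_def by simp
  have aa: "lam c n w * (a - a\<^sup>2) = 1/2"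
  proof -
    have "a - a\<^sup>2 = (1 - s\<^sup>2) / 4" unfolding a_def' by (simp add: power2_eq_square field_simps)
    also have "\<dots> = 1 / (2 * lam c n w)" using ss L by (simp add: field_simps)
    finally show ?thesis using L by simp
  qed
  have a0: "0 \<le> a" "a < 1/2" using s0 s1 a_def' by auto
  define v where "v i = (if x i \<ge> 1/2 then 1 else (0::real))" for i
  define d where "d i = \<bar>x i - v i\<bar>" for i
  have vv: "\<forall>i\<in>{1..n}. v i \<in> {0, 1}" unfolding v_def by auto
  define D where "D = (\<Sum>i=1..n. d i)"
  have DA: "D > a" using far vv unfolding D_def a_def l1dist_def d_def by blast
  have dprop: "0 \<le> d i \<and> d i \<le> 1/2 \<and> x i * (1 - x i) = d i * (1 - d i)" if "i \<in> {1..n}" for i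
    using x01 that unfolding d_def v_def by (auto simp: algebra_simps)
  define S where "S = (\<Sum>i=1..n. x i * (1 - x i))"
  have SD: "S = D - (\<Sum>i=1..n. (d i)\<^sup>2)"
  proof -
    have "S = (\<Sum>i=1..n. d i - (d i)\<^sup>2)"
      unfolding S_def using dprop by (intro sum.cong) (auto simp: power2_eq_square algebra_simps)
    then show ?thesis unfolding D_def by (simp add: sum_subtractf)
  qed
  have q1: "(\<Sum>i=1..n. (d i)\<^sup>2) \<le> D\<^sup>2" unfolding D_def using dprop by (intro sum_sq_le) auto
  have q2: "(\<Sum>i=1..n. (d i)\<^sup>2) \<le> (\<Sum>i=1..n. d i / 2)"
  proof (rule sum_mono)
    fix i assume "i \<in> {1..n}"
    then have "0 \<le> d i" "d i \<le> 1/2" using dprop by auto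
    then show "(d i)\<^sup>2 \<le> d i / 2" using mult_left_mono[of "d i" "1/2" "d i"] by (simp add: power2_eq_square)
  qed
  have q2': "(\<Sum>i=1..n. d i / 2) = D / 2" unfolding D_def by (simp add: sum_divide_distrib)
  have key: "lam c n w * S > 1/2"
  proof (cases "D \<le> 1/2")
    case True
    have "(D - a) * (1 - D - a) > 0" using DA True a0 by (intro mult_pos_pos) auto
    then have "D - D\<^sup>2 > a - a\<^sup>2" by (simp add: power2_eq_square algebra_simps)
    then have "S > a - a\<^sup>2" using SD q1 by linarith
    then have "lam c n w * S > lam c n w * (a - a\<^sup>2)" using L by simp
    then show ?thesis using aa by simp
  next
    case False
    then have "S \<ge> 1/4" using SD q2 q2' by linarith
    then have "lam c n w * S \<ge> 4 * (1/4)" using L by (intro mult_mono) auto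
    then show ?thesis by simp
  qed
  have "pW c n w0 w x \<ge> lam c n w * S" unfolding pW_def S_def by simp
  then show "fW c n w0 w x = -1" using key unfolding fW_def sign1_def by simp
qed simp

end
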